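(* Suppose Assumptions (A1) and (A2) hold, $C>C^*$, and $\mathcal{S}_E\cap\mathcal{S}_P=\emptyset$. Then: (i) for every nonempty $\mathscr{S}\in\mathcal{A}(k)$, $$\inf_{T\in\mathcal{T}^{1/2}_{\mathscr{S}}}\sup_{\tau\in\mathrm{Lip}_C(\mathbb{R}^d)}\mathcal{R}(T,\mathscr{S},\tau)=\frac{C}{2}\,\frac{1}{\#\mathcal{S}_P}\sum_{s\in\mathcal{S}_P}\|X_s-X_{N_{\mathscr{S}}(s)}\|;$$ (ii) consequently, any nonempty $\mathscr{S}^*\in\mathcal{A}(k)$ minimizing $\sum_{s\in\mathcal{S}_P}\|X_s-X_{N_{\mathscr{S}}(s)}\|$ over nonempty $\mathscr{S}\in\mathcal{A}(k)$ (a $k$-median solution) also minimizes $\inf_{T\in\mathcal{T}^{1/2}_{\mathscr{S}}}\sup_{\tau\in\mathrm{Lip}_C(\mathbb{R}^d)}\mathcal{R}(T,\mathscr{S},\tau)$ over nonempty $\mathscr{S}\in\mathcal{A}(k)$.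
   Context: Sites are indexed by $\mathcal{S}=\{1,\dots,S\}$. $\mathcal{S}_E\subseteq\mathcal{S}$ has $\mathrm{card}(\mathcal{S}_E)\ge2$, and $\mathcal{S}_P\subseteq\mathcal{S}$ is nonempty, with $\#\mathcal{S}_P=\mathrm{card}(\mathcal{S}_P)$. Each site $s$ has covariates $X_s\in\mathbb{R}^d$ and a known standard deviation $\sigma_s>0$. $\|\cdot\|$ is the Euclidean norm, and $\mathrm{Lip}_C(\mathbb{R}^d)$ is the set of $C$-Lipschitz functions $\mathbb{R}^d\to\mathbb{R}$ with respect to $\|\cdot\|$, where $C>0$. (A1): the true conditional treatment effect function $\tau$ lies in $\mathrm{Lip}_C(\mathbb{R}^d)$. (A2): the $X_s$ are pairwise distinct. Fix an integer $1\le k<\mathrm{card}(\mathcal{S}_E)$ and set $\mathcal{A}(k)=\{\mathscr{S}\subset\mathcal{S}_E:\mathrm{card}(\mathscr{S})\le k\}$. For a nonempty $\mathscr{S}$ with elements $\mathscr{S}_1<\dots<\mathscr{S}_m$, the data are $\hat\tau_{\mathscr{S}}\sim\mathcal{N}_m(\tau_{\mathscr{S}},\mathrm{diag}(\sigma^2_{\mathscr{S}_1},\dots,\sigma^2_{\mathscr{S}_m}))$, where $\tau_{\mathscr{S}}=(\tau(X_{\mathscr{S}_i}))_{i=1}^m$. A treatment rule is a measurable map $T:\mathbb{R}^m\to[0,1]^{\#\mathcal{S}_P}$. $\mathcal{T}^{1/2}_{\mathscr{S}}$ is the set of treatment rules with $\mathbb{E}[T_s(U)]=1/2$ for all $s\in\mathcal{S}_P$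 whenever $U\sim\mathcal{N}_m(0,\Sigma)$, for every positive definite diagonal $\Sigma$. Regret is $\mathcal{R}(T,\mathscr{S},\tau)=\frac{1}{\#\mathcal{S}_P}\sum_{s\in\mathcal{S}_P}\tau(X_s)\big(\mathbf{1}\{\tau(X_s)\ge0\}-\mathbb{E}_{\tau_{\mathscr{S}}}[T_s(\hat\tau_{\mathscr{S}})]\big)$. $N_{\mathscr{S}}(s)$ is the nearest neighbor of $s$ in $\mathscr{S}$ in Euclidean distance of covariates, with the smallest index chosen under ties. $C^*=\max\{\sqrt{\pi/2}\,\sigma_{N_{\mathscr{S}}(s)}/\|X_s-X_{N_{\mathscr{S}}(s)}\|:\mathscr{S}\in\mathcal{A}(k)\text{ nonempty},\ s\in\mathcal{S}_P\setminus\mathscr{S}\}$. *)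

theory Defs
  imports "HOL-Probability.Probability"
begin

text \<open>Sampling distribution of the estimates at the sites of \<open>Sc\<close>: independent
  normals with means \<open>mu i\<close> and standard deviations \<open>sd i\<close>, indexed by the sites
  of \<open>Sc\<close> (equivalent to the vector indexed by the sorted elements of \<open>Sc\<close>).\<close>
definition data_measure :: "(nat \<Rightarrow> real) \<Rightarrow> (nat \<Rightarrow> real) \<Rightarrow> nat set \<Rightarrow> (nat \<Rightarrow> real) measure" where
  "data_measure sd mu Sc = PiM Sc (\<lambda>i. density lborel (normal_density (mu i) (sd i)))"

definition treatment_rule :: "nat set \<Rightarrow> nat set \<Rightarrow> ((nat \<Rightarrow> real) \<Rightarrow> nat \<Rightarrow> real) \<Rightarrow> bool" where
  "treatment_rule SP Sc T \<longleftrightarrow>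
     (\<forall>s\<in>SP. (\<lambda>u. T u s) \<in> borel_measurable (PiM Sc (\<lambda>_. borel))
           \<and> (\<forall>u\<in>space (PiM Sc (\<lambda>_. borel)). 0 \<le> T u s \<and> T u s \<le> 1))"

definition half_rules :: "nat set \<Rightarrow> nat set \<Rightarrow> ((nat \<Rightarrow> real) \<Rightarrow> nat \<Rightarrow> real) set" where
  "half_rules SP Sc = {T. treatment_rule SP Sc T \<and>
     (\<forall>sd. (\<forall>i\<in>Sc. 0 < sd i) \<longrightarrow>
        (\<forall>s\<in>SP. (\<integral>u. T u s \<partial>(data_measure sd (\<lambda>_. 0) Sc)) = 1/2))}"

definition regret :: "nat set \<Rightarrow> (nat \<Rightarrow> 'a) \<Rightarrow> (nat \<Rightarrow> real) \<Rightarrow> nat set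
     \<Rightarrow> ((nat \<Rightarrow> real) \<Rightarrow> nat \<Rightarrow> real) \<Rightarrow> ('a \<Rightarrow> real) \<Rightarrow> real" where
  "regret SP X sdv Sc T tau =
     (1 / real (card SP)) * (\<Sum>s\<in>SP. tau (X s) *
        ((if tau (X s) \<ge> 0 then 1 else 0)
         - (\<integral>u. T u s \<partial>(data_measure sdv (\<lambda>i. tau (X i)) Sc))))"

definition minimax_regret :: "real \<Rightarrow> nat set \<Rightarrow> (nat \<Rightarrow> 'a::metric_space) \<Rightarrow> (nat \<Rightarrow> real)
     \<Rightarrow> nat set \<Rightarrow> ereal" where
  "minimax_regret C SP X sdv Sc =
     (INF T\<in>half_rules SP Sc. SUP tau\<in>{tau. C-lipschitz_on UNIV tau}.
        ereal (regret SP X sdv Sc T tau))"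

definition NN :: "(nat \<Rightarrow> 'a::metric_space) \<Rightarrow> nat set \<Rightarrow> nat \<Rightarrow> nat" where
  "NN X Sc s = (LEAST j. j \<in> Sc \<and> (\<forall>i\<in>Sc. dist (X s) (X j) \<le> dist (X s) (X i)))"

definition Acal :: "nat set \<Rightarrow> nat \<Rightarrow> nat set set" where
  "Acal SE k = {Sc. Sc \<subseteq> SE \<and> card Sc \<le> k}"

definition Cstar :: "nat set \<Rightarrow> nat set \<Rightarrow> nat \<Rightarrow> (nat \<Rightarrow> 'a::real_normed_vector) \<Rightarrow> (nat \<Rightarrow> real) \<Rightarrow> real" where
  "Cstar SE SP k X sdv = Max {sqrt (pi/2) * sdv (NN X Sc s) / norm (X s - X (NN X Sc s)) | Sc s.
       Sc \<in> Acal SE k \<and> Sc \<noteq> {} \<and> s \<in> SP - Sc}"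

end

theory Submission
  imports Defs
begin


definition N01 :: "real measure" where "N01 = density lborel std_normal_density"
definition Phi :: "real \<Rightarrow> real" where "Phi x = measure N01 {..x}"

lemma prob_N01: "prob_space N01"
  unfolding N01_def by (rule prob_space_normal_density) simp

lemma sets_N01[simp]: "sets N01 = sets borel" unfolding N01_def by simp
lemma space_N01[simp]: "space N01 = UNIV" unfolding N01_def by simp

lemma measure_N01: assumes "A \<in> sets borel"
  shows "measure N01 A = (LBINT y:A. std_normal_density y)"
proof -
  have "emeasure N01 A = (\<integral>\<^sup>+ y. ennreal (indicator A y * std_normal_density y) \<partial>lborel)"
    unfolding N01_def using assms
    by (subst emeasure_density) (auto intro!: nn_integral_cong simp: indicator_def)
  also have "\<dots> = ennreal (LBINT y:A. std_normal_density y)"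
  proof -
    have int: "integrable lborel (\<lambda>y. indicat_real A y * std_normal_density y)"
      using integrable_mult_indicator[of A lborel std_normal_density] assms by simp
    show ?thesis unfolding set_lebesgue_integral_def
      by (subst nn_integral_eq_integral[OF int]) auto
  qed
  finally show ?thesis unfolding measure_def by (simp add: set_lebesgue_integral_def)
qed

interpretation N01: real_distribution N01
  by (intro real_distribution.intro prob_N01 real_distribution_axioms.intro) simp

lemma Phi_cdf: "Phi = cdf N01" unfolding Phi_def cdf_def by simp

lemma Phi_mono: "x \<le> y \<Longrightarrow> Phi x \<le> Phi y"
  unfolding Phi_cdf by (rule N01.cdf_nondecreasing)
lemma Phi_nonneg: "0 \<le> Phi x" unfolding Phi_def by simp
lemma Phi_le1: "Phi x \<le> 1" unfolding Phi_cdf by (rule N01.cdf_bounded_prob)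
lemma Phi_at_top: "(Phi \<longlongrightarrow> 1) at_top" unfolding Phi_cdf by (rule N01.cdf_lim_at_top_prob)
lemma Phi_at_bot: "(Phi \<longlongrightarrow> 0) at_bot" unfolding Phi_cdf by (rule N01.cdf_lim_at_bot)

lemma Phi_diff: assumes "x \<le> y"
  shows "Phi y - Phi x = (LBINT t=x..y. std_normal_density t)"
proof -
  have "{..y} = {..x} \<union> {x<..y}" using assms by auto
  then have "Phi y = Phi x + measure N01 {x<..y}"
    unfolding Phi_def using N01.finite_measure_Union[of "{..x}" "{x<..y}"] by (auto simp: disjoint_iff)
  moreover have "measure N01 {x<..y} = (LBINT t=x..y. std_normal_density t)"
    using assms by (simp add: measure_N01 interval_integral_Ioc)
  ultimately show ?thesis by simp
qed

lemma Phi_eq: "Phi x = Phi 0 + (LBINT t=ereal 0..x. std_normal_density t)"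
proof (cases "0 \<le> x")
  case True then show ?thesis using Phi_diff[of 0 x] by simp
next
  case False then show ?thesis using Phi_diff[of x 0]
    by (simp add: interval_integral_endpoints_reverse[of "ereal 0" x])
qed

lemma cont_snd: "continuous_on A std_normal_density"
  unfolding normal_density_def by (intro continuous_intros) auto

lemma Phi_deriv: "(Phi has_real_derivative std_normal_density x) (at x)"
proof -
  define a where "a = - \<bar>x\<bar> - 1"
  define b where "b = \<bar>x\<bar> + 1"
  have "((\<lambda>u. LBINT t=ereal 0..u. std_normal_density t) has_vector_derivative std_normal_density x) (at x within {a..b})"
    by (rule interval_integral_FTC2) (auto simp: a_def b_def intro: cont_snd)
  then have "((\<lambda>u. LBINT t=ereal 0..u. std_normal_density t) has_vector_derivative std_normal_density x) (at x)"
    by (simp add: at_within_Icc_at a_def b_def)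
  then have "((\<lambda>u. Phi 0 + (LBINT t=ereal 0..u. std_normal_density t)) has_real_derivative std_normal_density x) (at x)"
    by (auto intro!: derivative_eq_intros simp: has_real_derivative_iff_has_vector_derivative)
  then show ?thesis by (subst (asm) Phi_eq[symmetric]) simp
qed

lemma Phi_cont: "isCont Phi x" using Phi_deriv DERIV_isCont by blast



lemma snd_deriv: "(std_normal_density has_real_derivative (- x * std_normal_density x)) (at x)"
proof -
  have "((\<lambda>x. exp (- x\<^sup>2 / 2)) has_real_derivative (exp (- x\<^sup>2 / 2) * (- x))) (at x)"
    by (auto intro!: derivative_eq_intros)
  from DERIV_cmult[OF this, of "1 / sqrt (2 * pi)"]
  show ?thesis by (simp add: std_normal_density_def[abs_def] std_normal_density_def algebra_simps)
qed

lemma snd_pos: "0 < std_normal_density x" by (simp add: normal_density_pos)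

lemma Phi_sym: "Phi (- x) = 1 - Phi x"
proof -
  define f where "f x = Phi x + Phi (- x)" for x
  have d: "DERIV f x :> 0" for x
  proof -
    have "DERIV f x :> std_normal_density x + std_normal_density (- x) * (- 1)"
      unfolding f_def by (auto intro!: derivative_eq_intros Phi_deriv[THEN DERIV_chain2])
    moreover have "std_normal_density (- x) = std_normal_density x"
      by (simp add: std_normal_density_def)
    ultimately show ?thesis by simp
  qed
  have c: "f y = f 0" for y using d by (intro DERIV_isconst_all) auto
  have "(f \<longlongrightarrow> 1 + 0) at_top"
    unfolding f_def
    by (intro tendsto_add Phi_at_top filterlim_compose[OF Phi_at_bot] filterlim_uminus_at_bot_at_top)
  then have lim: "(f \<longlongrightarrow> 1) at_top" by simp
  have fc: "f = (\<lambda>_. f 0)" by (intro ext) (rule c)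
  from lim have "((\<lambda>_::real. f 0) \<longlongrightarrow> 1) at_top" by (subst (asm) fc) assumption
  then have "f 0 = 1" by (simp add: tendsto_const_iff)
  then show ?thesis using c[of x] unfolding f_def by simp
qed

lemma Phi0: "Phi 0 = 1/2" using Phi_sym[of 0] by simp

lemma snd_div_lim: "((\<lambda>y. std_normal_density y / y) \<longlongrightarrow> 0) at_top"
proof (rule tendsto_sandwich[of "\<lambda>_. 0" _ _ "\<lambda>y. inverse y"])
  show "\<forall>\<^sub>F y in at_top. 0 \<le> std_normal_density y / y"
    using eventually_gt_at_top[of 0] by eventually_elim simp
  have le1: "std_normal_density y \<le> 1" for y
  proof -
    have "sqrt 1 \<le> sqrt (2 * pi)" using pi_gt3 by (intro real_sqrt_le_mono) simp
    then have "1 \<le> sqrt (2 * pi)" by simp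
    moreover have "exp (- y\<^sup>2 / 2) \<le> 1" by simp
    ultimately have e: "exp (- y\<^sup>2 / 2) \<le> sqrt (2 * pi)" by linarith
    show ?thesis unfolding std_normal_density_def using e by (simp add: field_simps)
  qed
  show "\<forall>\<^sub>F y in at_top. std_normal_density y / y \<le> inverse y"
    using eventually_gt_at_top[of 0] by eventually_elim (metis divide_right_mono inverse_eq_divide le1 less_imp_le)
  show "((\<lambda>y::real. inverse y) \<longlongrightarrow> 0) at_top"
    using tendsto_inverse_0_at_top[OF filterlim_ident] by simp
qed simp

lemma mills: assumes "0 < x" shows "1 - Phi x \<le> std_normal_density x / x"
proof (rule ccontr)
  define K where "K y = std_normal_density y / y - (1 - Phi y)" for y
  assume "\<not> ?thesis"
  then have neg: "K x < 0" unfolding K_def by simp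
  have dec: "K y \<le> K x" if "x \<le> y" for y
  proof (rule DERIV_nonpos_imp_nonincreasing[OF that])
    fix z assume z: "x \<le> z" "z \<le> y"
    then have "z \<noteq> 0" using assms by auto
    have "DERIV K z :> ((- z * std_normal_density z) * z - std_normal_density z * 1) / (z * z) + std_normal_density z"
      unfolding K_def using \<open>z \<noteq> 0\<close>
      by (auto intro!: derivative_eq_intros snd_deriv Phi_deriv)
    moreover have "((- z * std_normal_density z) * z - std_normal_density z * 1) / (z * z) + std_normal_density z
        = - std_normal_density z / (z * z)"
      using \<open>z \<noteq> 0\<close> by (simp add: field_simps)
    moreover have "- std_normal_density z / (z * z) \<le> 0"
      using snd_pos[of z] by (simp add: divide_nonpos_pos)
    ultimately show "\<exists>d. DERIV K z :> d \<and> d \<le> 0" by auto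
  qed
  have "(K \<longlongrightarrow> 0 - (1 - 1)) at_top"
    unfolding K_def by (intro tendsto_intros snd_div_lim Phi_at_top)
  moreover have "eventually (\<lambda>y. K y \<le> K x) at_top"
    unfolding eventually_at_top_linorder using dec by blast
  ultimately have "0 - (1 - 1) \<le> K x"
    by (rule tendsto_upperbound) simp
  then show False using neg by simp
qed



definition cc :: real where "cc = 2 * std_normal_density 0"

lemma cc_eq: "cc = 2 / sqrt (2 * pi)" unfolding cc_def std_normal_density_def by simp

lemma cc_bounds: "1/2 \<le> cc" "cc \<le> 1"
proof -
  have "sqrt (2*pi) \<le> sqrt 16" using pi_less_4 by (intro real_sqrt_le_mono) simp
  then have a: "sqrt (2*pi) \<le> 4" by simp
  have "sqrt 4 \<le> sqrt (2*pi)" using pi_gt3 by (intro real_sqrt_le_mono) simp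
  then have b: "2 \<le> sqrt (2*pi)" by simp
  show "1/2 \<le> cc" using a b unfolding cc_eq by (simp add: field_simps)
  show "cc \<le> 1" using a b unfolding cc_eq by (simp add: field_simps)
qed

definition GG :: "real \<Rightarrow> real" where
  "GG x = std_normal_density x * (1 + cc * x) - cc * (1 - Phi x)"

lemma GG_deriv: "DERIV GG x :> std_normal_density x * (2 * cc - x - cc * x\<^sup>2)"
proof -
  have "DERIV GG x :> (- x * std_normal_density x) * (1 + cc * x) + std_normal_density x * cc - cc * (- std_normal_density x)"
    unfolding GG_def by (auto intro!: derivative_eq_intros snd_deriv Phi_deriv)
  then show ?thesis by (simp add: algebra_simps power2_eq_square)
qed

lemma GG0: "GG 0 = 0" unfolding GG_def cc_def Phi0 by simp

lemma GG_neg: assumes "x \<le> 0" shows "GG x \<le> 0"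
proof (cases "1 + cc * x \<le> 0")
  case True
  have a: "std_normal_density x * (1 + cc * x) \<le> 0"
    using True snd_pos[of x] by (simp add: mult_nonneg_nonpos)
  have b: "0 \<le> cc * (1 - Phi x)"
    using Phi_le1[of x] cc_bounds by simp
  show ?thesis unfolding GG_def using a b by simp
next
  case False
  have "GG x \<le> GG 0"
  proof (rule DERIV_nonneg_imp_nondecreasing[OF assms])
    fix z assume z: "x \<le> z" "z \<le> 0"
    have "1 + cc * z \<ge> 1 + cc * x" using z cc_bounds by (simp add: mult_left_mono)
    then have "z * (1 + cc * z) \<le> 0" using False z by (simp add: mult_nonpos_nonneg)
    then have "0 \<le> 2 * cc - z - cc * z\<^sup>2" using cc_bounds by (simp add: algebra_simps power2_eq_square)
    then show "\<exists>y. DERIV GG z :> y \<and> 0 \<le> y" using GG_deriv[of z] snd_pos[of z] by (intro exI[of _ "std_normal_density z * (2 * cc - z - cc * z\<^sup>2)"] conjI) auto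
  qed
  then show ?thesis using GG0 by simp
qed

lemma GG_pos: assumes "0 \<le> x" shows "0 \<le> GG x"
proof (cases "x \<le> 7/10")
  case True
  have "GG 0 \<le> GG x"
  proof (rule DERIV_nonneg_imp_nondecreasing[OF assms])
    fix z assume z: "0 \<le> z" "z \<le> x"
    have "z * z \<le> 7/10 * (7/10)" using z True by (intro mult_mono) auto
    then have "cc * (z * z) \<le> cc * (49/100)" using cc_bounds by (intro mult_left_mono) auto
    then have "0 \<le> 2 * cc - z - cc * (z * z)" using cc_bounds z True by linarith
    then have "0 \<le> 2 * cc - z - cc * z\<^sup>2" by (simp add: power2_eq_square)
    then show "\<exists>y. DERIV GG z :> y \<and> 0 \<le> y" using GG_deriv[of z] snd_pos[of z] by (intro exI[of _ "std_normal_density z * (2 * cc - z - cc * z\<^sup>2)"] conjI) auto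
  qed
  then show ?thesis using GG0 by simp
next
  case False
  then have xp: "0 < x" by simp
  have m: "cc * (1 - Phi x) \<le> cc * (std_normal_density x / x)"
    using mills[OF xp] cc_bounds by (intro mult_left_mono) auto
  have "x * x \<ge> 7/10 * (7/10)" using False by (intro mult_mono) auto
  then have "cc * (x * x) \<ge> cc * (49/100)" using cc_bounds by (intro mult_left_mono) auto
  then have "0 \<le> x + cc * (x * x) - cc" using cc_bounds False by linarith
  then have "0 \<le> x + cc * x * x - cc" by (simp add: mult.assoc)
  then have "0 \<le> std_normal_density x * (x + cc * x * x - cc) / x"
    using snd_pos[of x] xp by simp
  also have "std_normal_density x * (x + cc * x * x - cc) / x = std_normal_density x * (1 + cc * x) - cc * (std_normal_density x / x)"
    using xp by (simp add: field_simps)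
  finally show ?thesis unfolding GG_def using m by simp
qed

definition HH :: "real \<Rightarrow> real" where "HH x = (1 + cc * x) * (1 - Phi x)"

lemma HH_deriv: "DERIV HH x :> - GG x"
proof -
  have "DERIV HH x :> cc * (1 - Phi x) + (1 + cc * x) * (- std_normal_density x)"
    unfolding HH_def by (auto intro!: derivative_eq_intros Phi_deriv)
  then show ?thesis unfolding GG_def by (simp add: algebra_simps)
qed

lemma HH_le: "HH x \<le> 1/2"
proof -
  have "HH 0 = 1/2" unfolding HH_def Phi0 by simp
  moreover have "HH x \<le> HH 0"
  proof (cases "x \<le> 0")
    case True
    show ?thesis
    proof (rule DERIV_nonneg_imp_nondecreasing[OF True])
      fix z assume "x \<le> z" "z \<le> 0"
      then show "\<exists>y. DERIV HH z :> y \<and> 0 \<le> y" using HH_deriv[of z] GG_neg[of z] by (intro exI[of _ "- GG z"]) auto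
    qed
  next
    case False
    show ?thesis
    proof (rule DERIV_nonpos_imp_nonincreasing[of 0 x HH])
      show "0 \<le> x" using False by simp
      fix z assume "0 \<le> z" "z \<le> x"
      then show "\<exists>y. DERIV HH z :> y \<and> y \<le> 0" using HH_deriv[of z] GG_pos[of z] by (intro exI[of _ "- GG z"]) auto
    qed
  qed
  ultimately show ?thesis by simp
qed



abbreviation NM :: "real \<Rightarrow> real \<Rightarrow> real measure" where
  "NM \<mu> \<sigma> \<equiv> density lborel (normal_density \<mu> \<sigma>)"

lemma prob_NM: "0 < \<sigma> \<Longrightarrow> prob_space (NM \<mu> \<sigma>)"
  by (rule prob_space_normal_density)

lemma cdf_normal:
  assumes s: "0 < \<sigma>"
  shows "measure (NM \<mu> \<sigma>) {..x} = Phi ((x - \<mu>) / \<sigma>)"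
proof -
  interpret P: prob_space "NM \<mu> \<sigma>" using prob_NM[OF s] .
  have "distributed (NM \<mu> \<sigma>) lborel (\<lambda>x. x) (normal_density \<mu> \<sigma>)"
    unfolding distributed_def by (simp add: distr_id2)
  then have d: "distributed (NM \<mu> \<sigma>) lborel (\<lambda>x. (x - \<mu>) / \<sigma>) std_normal_density"
    using P.normal_standard_normal_convert[OF s] by simp
  have "Phi ((x - \<mu>) / \<sigma>) = measure (distr (NM \<mu> \<sigma>) lborel (\<lambda>x. (x - \<mu>) / \<sigma>)) {..(x - \<mu>) / \<sigma>}"
    unfolding Phi_def N01_def using distributed_distr_eq_density[OF d] by simp
  also have "\<dots> = measure (NM \<mu> \<sigma>) ((\<lambda>x. (x - \<mu>) / \<sigma>) -` {..(x - \<mu>) / \<sigma>} \<inter> space (NM \<mu> \<sigma>))"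
    by (rule measure_distr) (use distributed_measurable[OF d] in auto)
  also have "(\<lambda>x. (x - \<mu>) / \<sigma>) -` {..(x - \<mu>) / \<sigma>} \<inter> space (NM \<mu> \<sigma>) = {..x}"
    using s by (auto simp: divide_le_cancel)
  finally show ?thesis by simp
qed

lemma distr_pair_snd':
  assumes "prob_space A" "prob_space B"
  shows "distr (A \<Otimes>\<^sub>M B) B snd = B"
proof (intro measure_eqI)
  interpret A: prob_space A by fact
  interpret B: prob_space B by fact
  interpret AB: pair_sigma_finite A B ..
  fix S assume S: "S \<in> sets (distr (A \<Otimes>\<^sub>M B) B snd)"
  from S have "emeasure (distr (A \<Otimes>\<^sub>M B) B snd) S = emeasure (A \<Otimes>\<^sub>M B) (space A \<times> S)"
    by (auto simp add: emeasure_distr space_pair_measure dest: sets.sets_into_space intro!: arg_cong2[where f=emeasure])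
  with S show "emeasure (distr (A \<Otimes>\<^sub>M B) B snd) S = emeasure B S"
    by (simp add: B.emeasure_pair_measure_Times A.emeasure_space_1)
qed simp

lemma conv_Phi:
  assumes s: "0 < \<sigma>" and r: "0 < \<rho>"
  shows "(\<integral>u. Phi (u / \<rho>) \<partial>NM \<mu> \<sigma>) = Phi (\<mu> / sqrt (\<sigma>\<^sup>2 + \<rho>\<^sup>2))"
proof -
  let ?P1 = "NM \<mu> \<sigma>" and ?P2 = "NM 0 \<rho>"
  let ?M = "?P2 \<Otimes>\<^sub>M ?P1"
  interpret P1: prob_space ?P1 using prob_NM[OF s] .
  interpret P2: prob_space ?P2 using prob_NM[OF r] .
  interpret M: pair_prob_space ?P2 ?P1 ..
  have sM: "sets ?M = sets (borel \<Otimes>\<^sub>M borel)"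
    by (intro sets_pair_measure_cong) auto
  have dfst: "distr ?M borel fst = ?P2"
    using P1.distr_pair_fst[of ?P2] by (subst distr_cong[of _ ?M borel ?P2]) auto
  have dsnd: "distr ?M borel snd = ?P1"
    using distr_pair_snd'[OF P2.prob_space_axioms P1.prob_space_axioms]
    by (subst distr_cong[of _ ?M borel ?P1]) auto
  have ind: "M.indep_var borel fst borel snd"
  proof (subst M.indep_var_distribution_eq, intro conjI)
    have m1: "measurable ?M ?P2 = measurable ?M (borel::real measure)" by (rule measurable_cong_sets) auto
    have m2: "measurable ?M ?P1 = measurable ?M (borel::real measure)" by (rule measurable_cong_sets) auto
    show "fst \<in> measurable ?M (borel::real measure)" using measurable_fst[of ?P2 ?P1] m1 by simp
    show "snd \<in> measurable ?M (borel::real measure)" using measurable_snd[of ?P2 ?P1] m2 by simp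
    show "distr ?M borel fst \<Otimes>\<^sub>M distr ?M borel snd = distr ?M (borel \<Otimes>\<^sub>M borel) (\<lambda>x. (fst x, snd x))"
      using sM by (simp add: dfst dsnd distr_id2)
  qed
  have mf: "fst \<in> measurable ?M (lborel::real measure)"
    using measurable_fst[of ?P2 ?P1] measurable_cong_sets[of ?M ?M ?P2 lborel] by simp
  have ms: "snd \<in> measurable ?M (lborel::real measure)"
    using measurable_snd[of ?P2 ?P1] measurable_cong_sets[of ?M ?M ?P1 lborel] by simp
  have "distr ?M lborel fst = distr ?M borel fst" by (rule distr_cong) auto
  then have d1: "distributed ?M lborel fst (normal_density 0 \<rho>)"
    unfolding distributed_def using dfst mf by simp
  have "distr ?M lborel snd = distr ?M borel snd" by (rule distr_cong) auto
  then have d2: "distributed ?M lborel snd (normal_density \<mu> \<sigma>)"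
    unfolding distributed_def using dsnd ms by simp
  have dd: "distributed ?M lborel (\<lambda>x. fst x - snd x) (normal_density (0 - \<mu>) (sqrt (\<rho>\<^sup>2 + \<sigma>\<^sup>2)))"
    by (rule M.diff_indep_normal[OF _ r s d1 d2]) (use ind in simp)
  define A where "A = {p::real\<times>real. fst p \<le> snd p}"
  have "{p::real\<times>real. fst p \<le> snd p} = {p \<in> space (borel \<Otimes>\<^sub>M borel). fst p \<le> snd p}"
    by (simp add: space_pair_measure)
  also have "\<dots> \<in> sets (borel \<Otimes>\<^sub>M borel)" by measurable
  finally have A: "A \<in> sets ?M" unfolding A_def sM .
  have "measure ?M A = measure (distr ?M lborel (\<lambda>x. fst x - snd x)) {..0}"
  proof (subst measure_distr)
    show "(\<lambda>x. fst x - snd x) \<in> measurable ?M lborel" by (rule distributed_measurable[OF dd])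
    have "(\<lambda>x. fst x - snd x) -` {..0::real} = A" by (auto simp: A_def)
    then show "measure ?M A = measure ?M ((\<lambda>x. fst x - snd x) -` {..0} \<inter> space ?M)"
      by (simp add: space_pair_measure)
  qed simp
  also have "\<dots> = Phi (\<mu> / sqrt (\<sigma>\<^sup>2 + \<rho>\<^sup>2))"
  proof -
    have pos: "0 < \<rho>\<^sup>2 + \<sigma>\<^sup>2" using r s by (simp add: add_pos_pos)
    show ?thesis
      using distributed_distr_eq_density[OF dd] cdf_normal[of "sqrt (\<rho>\<^sup>2 + \<sigma>\<^sup>2)" "0 - \<mu>" 0] pos
      by (simp add: add.commute)
  qed
  finally have 1: "measure ?M A = Phi (\<mu> / sqrt (\<sigma>\<^sup>2 + \<rho>\<^sup>2))" .
  have "emeasure ?M A = (\<integral>\<^sup>+u. emeasure ?P2 ((\<lambda>x. (x, u)) -` A) \<partial>?P1)"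
    by (rule M.emeasure_pair_measure_alt2[OF A])
  also have "\<dots> = (\<integral>\<^sup>+u. ennreal (Phi (u / \<rho>)) \<partial>?P1)"
  proof (intro nn_integral_cong)
    fix u
    have "(\<lambda>x. (x, u)) -` A = {..u}" by (auto simp: A_def)
    then show "emeasure ?P2 ((\<lambda>x. (x, u)) -` A) = ennreal (Phi (u / \<rho>))"
      using cdf_normal[OF r, of 0 u] by (simp add: P2.emeasure_eq_measure)
  qed
  also have "\<dots> = ennreal (\<integral>u. Phi (u / \<rho>) \<partial>?P1)"
    by (rule nn_integral_eq_integral)
       (auto intro!: P1.integrable_const_bound[where B=1] simp: Phi_nonneg Phi_le1 Phi_cont continuous_at_imp_continuous_on borel_measurable_continuous_onI
             intro: measurable_compose[OF _ borel_measurable_continuous_onI])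
  finally have "measure ?M A = (\<integral>u. Phi (u / \<rho>) \<partial>?P1)"
    by (simp add: M.emeasure_eq_measure integral_nonneg_AE Phi_nonneg)
  then show ?thesis using 1 by simp
qed



lemma cc_pos: "0 < cc" using cc_bounds by simp

lemma site_bound:
  assumes a: "0 < a" and tm: "\<bar>t - m\<bar> \<le> a"
  shows "t * ((if 0 \<le> t then 1 else 0) - Phi (m / (a * cc))) \<le> a / 2"
proof -
  have ac: "0 < a * cc" using a cc_pos by simp
  show ?thesis
  proof (cases "0 \<le> t")
    case True
    define x where "x = (t - a) / (a * cc)"
    have "Phi x \<le> Phi (m / (a * cc))"
      unfolding x_def using tm ac by (intro Phi_mono divide_right_mono) auto
    then have "t * (1 - Phi (m / (a * cc))) \<le> t * (1 - Phi x)"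
      using True by (intro mult_left_mono) auto
    also have "t = a * (1 + cc * x)" unfolding x_def using a cc_pos by (simp add: field_simps)
    then have "t * (1 - Phi x) = a * HH x" unfolding HH_def by simp
    also have "a * HH x \<le> a * (1/2)" using a HH_le[of x] by (intro mult_left_mono) auto
    finally show ?thesis using True by simp
  next
    case False
    define x where "x = (- t - a) / (a * cc)"
    have "Phi (m / (a * cc)) \<le> Phi ((t + a) / (a * cc))"
      using tm ac by (intro Phi_mono divide_right_mono) auto
    also have "(t + a) / (a * cc) = - x" unfolding x_def by (simp add: diff_divide_distrib add_divide_distrib)
    finally have "(- t) * Phi (m / (a * cc)) \<le> (- t) * (1 - Phi x)"
      using False Phi_sym[of x] by (intro mult_left_mono) auto
    also have "- t = a * (1 + cc * x)" unfolding x_def using a cc_pos by (simp add: field_simps)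
    then have "(- t) * (1 - Phi x) = a * HH x" unfolding HH_def by simp
    also have "a * HH x \<le> a * (1/2)" using a HH_le[of x] by (intro mult_left_mono) auto
    finally show ?thesis using False by simp
  qed
qed



lemma Phi_meas: "(\<lambda>x. Phi (x / r)) \<in> borel_measurable borel"
proof -
  have "continuous_on UNIV (\<lambda>x. Phi (x * (1 / r)))"
    by (intro continuous_at_imp_continuous_on ballI continuous_intros isCont_o2[OF _ Phi_cont])
  then show ?thesis by (simp add: borel_measurable_continuous_onI)
qed

lemma NN_prop:
  assumes "finite Sc" "Sc \<noteq> {}"
  shows "NN X Sc s \<in> Sc \<and> (\<forall>i\<in>Sc. dist (X s) (X (NN X Sc s)) \<le> dist (X s) (X i))"
proof -
  let ?P = "\<lambda>j. j \<in> Sc \<and> (\<forall>i\<in>Sc. dist (X s) (X j) \<le> dist (X s) (X i))"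
  let ?m = "Min ((\<lambda>i. dist (X s) (X i)) ` Sc)"
  have "?m \<in> (\<lambda>i. dist (X s) (X i)) ` Sc" using assms by (intro Min_in) auto
  then obtain j where j: "j \<in> Sc" "dist (X s) (X j) = ?m" by auto
  have "?P j" using j assms by auto
  then have "?P (LEAST j. ?P j)" by (rule LeastI)
  then show ?thesis unfolding NN_def .
qed

lemma marginal:
  fixes f :: "real \<Rightarrow> real"
  assumes sd: "\<forall>i\<in>Sc. 0 < sd i" and j: "j \<in> Sc" and f: "f \<in> borel_measurable borel"
  shows "(\<integral>u. f (u j) \<partial>data_measure sd mu Sc) = (\<integral>x. f x \<partial>NM (mu j) (sd j))"
proof -
  have "distr (data_measure sd mu Sc) (NM (mu j) (sd j)) (\<lambda>\<omega>. \<omega> j) = NM (mu j) (sd j)"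
    unfolding data_measure_def
    by (rule distr_PiM_component[of Sc "\<lambda>i. NM (mu i) (sd i)" j, simplified])
       (use sd j prob_NM in auto)
  then have "(\<integral>x. f x \<partial>NM (mu j) (sd j)) = (\<integral>x. f x \<partial>distr (data_measure sd mu Sc) (NM (mu j) (sd j)) (\<lambda>\<omega>. \<omega> j))"
    by simp
  also have "\<dots> = (\<integral>u. f (u j) \<partial>data_measure sd mu Sc)"
  proof (rule integral_distr)
    show "(\<lambda>\<omega>. \<omega> j) \<in> measurable (data_measure sd mu Sc) (NM (mu j) (sd j))"
      unfolding data_measure_def using j by (rule measurable_component_singleton)
    show "f \<in> borel_measurable (NM (mu j) (sd j))" using f by simp
  qed
  finally show ?thesis by simp
qed

lemma E_Phi:
  assumes sd: "\<forall>i\<in>Sc. 0 < sd i" and j: "j \<in> Sc" and r: "0 < r"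
  shows "(\<integral>u. Phi (u j / r) \<partial>data_measure sd mu Sc) = Phi (mu j / sqrt ((sd j)\<^sup>2 + r\<^sup>2))"
  using marginal[OF sd j Phi_meas[of r]] conv_Phi[of "sd j" r "mu j"] sd j r by simp

lemma sqrt_pi_cc: "sqrt (pi / 2) * cc = 1"
proof -
  have "sqrt (2 * pi) = sqrt (2\<^sup>2 * (pi / 2))" by (simp add: power2_eq_square)
  also have "\<dots> = sqrt (2\<^sup>2) * sqrt (pi / 2)" by (rule real_sqrt_mult)
  finally have "sqrt (2 * pi) = 2 * sqrt (pi / 2)" by simp
  moreover have "0 < sqrt (pi / 2)" by simp
  ultimately show ?thesis unfolding cc_eq by (simp add: field_simps)
qed



lemma main_eq:
  fixes nS k :: nat and SE SP :: "nat set" and X :: "nat \<Rightarrow> real^'d"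
    and sdv :: "nat \<Rightarrow> real" and C :: real
  assumes SE_sub: "SE \<subseteq> {1..nS}"
    and SP_sub: "SP \<subseteq> {1..nS}" and SP_ne: "SP \<noteq> {}"
    and sigma_pos: "\<forall>s\<in>{1..nS}. sdv s > 0"
    and C_pos: "C > 0"
    and A2: "inj_on X {1..nS}"
    and C_gt: "C > Cstar SE SP k X sdv"
    and disj: "SE \<inter> SP = {}"
    and Sc: "Sc \<in> Acal SE k" and Sc_ne: "Sc \<noteq> {}"
  shows "minimax_regret C SP X sdv Sc =
            ereal (C / 2 * (1 / real (card SP)) * (\<Sum>s\<in>SP. norm (X s - X (NN X Sc s))))"
proof -
  have fin_SE: "finite SE" using SE_sub finite_subset by blast
  have fin_SP: "finite SP" using SP_sub finite_subset by blast
  have Sc_sub: "Sc \<subseteq> SE" using Sc unfolding Acal_def by simp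
  then have fin_Sc: "finite Sc" using fin_SE finite_subset by blast
  have sdv_Sc: "\<forall>i\<in>Sc. 0 < sdv i" using Sc_sub SE_sub sigma_pos by blast
  define N where "N = NN X Sc"
  define \<delta> where "\<delta> s = norm (X s - X (N s))" for s
  define V where "V = C / 2 * (1 / real (card SP)) * (\<Sum>s\<in>SP. \<delta> s)"
  have Np: "N s \<in> Sc" "\<And>i. i \<in> Sc \<Longrightarrow> dist (X s) (X (N s)) \<le> dist (X s) (X i)" for s
    using NN_prop[OF fin_Sc Sc_ne, of X s] unfolding N_def by auto
  have \<delta>_pos: "0 < \<delta> s" if s: "s \<in> SP" for s
  proof -
    have "s \<notin> Sc" using s disj Sc_sub by blast
    then have "s \<noteq> N s" using Np(1)[of s] by auto
    moreover have "s \<in> {1..nS}" "N s \<in> {1..nS}" using s SP_sub Np(1)[of s] Sc_sub SE_sub by auto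
    ultimately have "X s \<noteq> X (N s)" using A2 by (auto dest: inj_onD)
    then show ?thesis unfolding \<delta>_def by simp
  qed
  have Cs: "sdv (N s) < C * \<delta> s * cc" if s: "s \<in> SP" for s
  proof -
    let ?S = "{sqrt (pi/2) * sdv (NN X Sc s) / norm (X s - X (NN X Sc s)) | Sc s.
       Sc \<in> Acal SE k \<and> Sc \<noteq> {} \<and> s \<in> SP - Sc}"
    have "?S \<subseteq> (\<lambda>p. sqrt (pi/2) * sdv (NN X (fst p) (snd p)) / norm (X (snd p) - X (NN X (fst p) (snd p)))) ` (Pow SE \<times> SP)"
      unfolding Acal_def by force
    then have fin: "finite ?S" by (rule finite_subset) (use fin_SE fin_SP in auto)
    have "s \<notin> Sc" using s disj Sc_sub by blast
    then have "sqrt (pi/2) * sdv (N s) / \<delta> s \<in> ?S"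
      using Sc Sc_ne s unfolding N_def \<delta>_def by blast
    then have "sqrt (pi/2) * sdv (N s) / \<delta> s \<le> Cstar SE SP k X sdv"
      unfolding Cstar_def using fin by (rule Max_ge[rotated])
    then have "sqrt (pi/2) * sdv (N s) / \<delta> s < C" using C_gt by simp
    then have "sqrt (pi/2) * sdv (N s) < C * \<delta> s" using \<delta>_pos[OF s] by (simp add: divide_less_eq)
    then have "sqrt (pi/2) * sdv (N s) * cc < C * \<delta> s * cc" using cc_pos by simp
    moreover have "sqrt (pi/2) * sdv (N s) * cc = sdv (N s)"
      using sqrt_pi_cc by (metis mult.commute mult.left_commute mult_1_right)
    ultimately show ?thesis by simp
  qed
  define \<rho> where "\<rho> s = sqrt ((C * \<delta> s * cc)\<^sup>2 - (sdv (N s))\<^sup>2)" for s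
  have sdvN: "0 < sdv (N s)" for s using sdv_Sc Np(1)[of s] by blast
  have \<rho>_pos: "0 < \<rho> s" if "s \<in> SP" for s
  proof -
    have "(sdv (N s))\<^sup>2 < (C * \<delta> s * cc)\<^sup>2"
      using Cs[OF that] sdvN[of s] by (intro power_strict_mono) auto
    then show ?thesis unfolding \<rho>_def by simp
  qed
  have sq: "sqrt ((sdv (N s))\<^sup>2 + (\<rho> s)\<^sup>2) = C * \<delta> s * cc" if "s \<in> SP" for s
  proof -
    have "(sdv (N s))\<^sup>2 < (C * \<delta> s * cc)\<^sup>2"
      using Cs[OF that] sdvN[of s] by (intro power_strict_mono) auto
    then have "(\<rho> s)\<^sup>2 = (C * \<delta> s * cc)\<^sup>2 - (sdv (N s))\<^sup>2" unfolding \<rho>_def by simp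
    then have "(sdv (N s))\<^sup>2 + (\<rho> s)\<^sup>2 = (C * \<delta> s * cc)\<^sup>2" by simp
    moreover have "0 \<le> C * \<delta> s * cc" using C_pos \<delta>_pos[OF that] cc_pos by simp
    ultimately show ?thesis by simp
  qed
  define T0 where "T0 u s = Phi (u (N s) / \<rho> s)" for u :: "nat \<Rightarrow> real" and s
  have T0_half: "T0 \<in> half_rules SP Sc"
    unfolding half_rules_def treatment_rule_def
  proof (intro CollectI conjI ballI allI impI)
    fix s assume "s \<in> SP"
    show "(\<lambda>u. T0 u s) \<in> borel_measurable (PiM Sc (\<lambda>_. borel))"
      unfolding T0_def
      using measurable_compose[OF measurable_component_singleton[OF Np(1)[of s], of "\<lambda>_. borel"] Phi_meas[of "\<rho> s"]]
      by simp
  next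
    fix s and u :: "nat \<Rightarrow> real" assume "s \<in> SP" "u \<in> space (PiM Sc (\<lambda>_. borel))"
    show "0 \<le> T0 u s" "T0 u s \<le> 1" unfolding T0_def by (rule Phi_nonneg, rule Phi_le1)
  next
    fix sd :: "nat \<Rightarrow> real" and s assume sd: "\<forall>i\<in>Sc. 0 < sd i" and s: "s \<in> SP"
    show "(\<integral>u. T0 u s \<partial>data_measure sd (\<lambda>_. 0) Sc) = 1/2"
      unfolding T0_def using E_Phi[OF sd Np(1)[of s] \<rho>_pos[OF s], of "\<lambda>_. 0"] Phi0 by simp
  qed
  have eqV: "(1 / real (card SP)) * (\<Sum>s\<in>SP. C / 2 * \<delta> s) = V"
    unfolding V_def sum_distrib_left[symmetric, of "C/2"] by (simp add: ac_simps)
  have upper: "regret SP X sdv Sc T0 tau \<le> V" if L: "C-lipschitz_on UNIV tau" for tau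
  proof -
    have trm: "tau (X s) * ((if tau (X s) \<ge> 0 then 1 else 0)
         - (\<integral>u. T0 u s \<partial>(data_measure sdv (\<lambda>i. tau (X i)) Sc))) \<le> C / 2 * \<delta> s"
      if s: "s \<in> SP" for s
    proof -
      have E: "(\<integral>u. T0 u s \<partial>(data_measure sdv (\<lambda>i. tau (X i)) Sc)) = Phi (tau (X (N s)) / (C * \<delta> s * cc))"
        unfolding T0_def using E_Phi[OF sdv_Sc Np(1)[of s] \<rho>_pos[OF s], of "\<lambda>i. tau (X i)"] sq[OF s] by simp
      have "dist (tau (X s)) (tau (X (N s))) \<le> C * dist (X s) (X (N s))"
        using lipschitz_onD[OF L] by simp
      then have "\<bar>tau (X s) - tau (X (N s))\<bar> \<le> C * \<delta> s" unfolding \<delta>_def by (simp add: dist_real_def dist_norm)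
      from site_bound[OF _ this] show ?thesis using E C_pos \<delta>_pos[OF s] by simp
    qed
    have "(\<Sum>s\<in>SP. tau (X s) * ((if tau (X s) \<ge> 0 then 1 else 0)
         - (\<integral>u. T0 u s \<partial>(data_measure sdv (\<lambda>i. tau (X i)) Sc)))) \<le> (\<Sum>s\<in>SP. C / 2 * \<delta> s)"
      by (rule sum_mono) (rule trm)
    then have "(1 / real (card SP)) * (\<Sum>s\<in>SP. tau (X s) * ((if tau (X s) \<ge> 0 then 1 else 0)
         - (\<integral>u. T0 u s \<partial>(data_measure sdv (\<lambda>i. tau (X i)) Sc)))) \<le> (1 / real (card SP)) * (\<Sum>s\<in>SP. C / 2 * \<delta> s)"
      by (intro mult_left_mono) auto
    with eqV show ?thesis unfolding regret_def by linarith
  qed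
  define tau where "tau x = C * infdist x (X ` Sc)" for x
  have tauL: "C-lipschitz_on UNIV tau"
  proof (rule lipschitz_onI)
    fix x y :: "real^'d"
    have "\<bar>infdist x (X ` Sc) - infdist y (X ` Sc)\<bar> \<le> dist x y" by (rule infdist_triangle_abs)
    then have "C * \<bar>infdist x (X ` Sc) - infdist y (X ` Sc)\<bar> \<le> C * dist x y" using C_pos by simp
    then show "dist (tau x) (tau y) \<le> C * dist x y"
      unfolding tau_def dist_real_def using C_pos by (simp add: abs_mult right_diff_distrib[symmetric])
  qed (use C_pos in simp)
  have tau_Sc: "tau (X i) = 0" if "i \<in> Sc" for i unfolding tau_def using that by simp
  have tau_SP: "tau (X s) = C * \<delta> s" for s
  proof -
    have "infdist (X s) (X ` Sc) \<le> dist (X s) (X (N s))" using Np(1) by (intro infdist_le) auto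
    moreover have "dist (X s) (X (N s)) \<le> infdist (X s) (X ` Sc)"
      unfolding infdist_notempty[of "X ` Sc", OF iffD2[OF image_is_empty[THEN arg_cong[where f=Not]] Sc_ne]]
      using Sc_ne Np(2) by (intro cINF_greatest) auto
    ultimately show ?thesis unfolding tau_def \<delta>_def by (simp add: dist_norm)
  qed
  have lower: "V \<le> regret SP X sdv Sc T tau" if T: "T \<in> half_rules SP Sc" for T
  proof -
    have dm: "data_measure sdv (\<lambda>i. tau (X i)) Sc = data_measure sdv (\<lambda>_. 0) Sc"
      unfolding data_measure_def by (rule PiM_cong) (auto simp: tau_Sc)
    have h: "(\<integral>u. T u s \<partial>data_measure sdv (\<lambda>_. 0) Sc) = 1/2" if "s \<in> SP" for s
      using T sdv_Sc that unfolding half_rules_def by blast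
    have sumeq: "(\<Sum>s\<in>SP. tau (X s) * ((if tau (X s) \<ge> 0 then 1 else 0)
         - (\<integral>u. T u s \<partial>(data_measure sdv (\<lambda>i. tau (X i)) Sc)))) = (\<Sum>s\<in>SP. C / 2 * \<delta> s)"
    proof (rule sum.cong[OF refl])
      fix s assume s: "s \<in> SP"
      show "tau (X s) * ((if tau (X s) \<ge> 0 then 1 else 0)
         - (\<integral>u. T u s \<partial>(data_measure sdv (\<lambda>i. tau (X i)) Sc))) = C / 2 * \<delta> s"
        using h[OF s] tau_SP[of s] C_pos \<delta>_pos[OF s] dm by simp
    qed
    have "regret SP X sdv Sc T tau = (1 / real (card SP)) * (\<Sum>s\<in>SP. C / 2 * \<delta> s)"
      unfolding regret_def sumeq ..
    with eqV show ?thesis by linarith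
  qed
  have "minimax_regret C SP X sdv Sc = ereal V"
    unfolding minimax_regret_def
  proof (rule antisym)
    have "(INF T\<in>half_rules SP Sc. SUP tau\<in>{tau. C-lipschitz_on UNIV tau}. ereal (regret SP X sdv Sc T tau))
        \<le> (SUP tau\<in>{tau. C-lipschitz_on UNIV tau}. ereal (regret SP X sdv Sc T0 tau))"
      using T0_half by (rule INF_lower)
    also have "\<dots> \<le> ereal V" using upper by (intro SUP_least) auto
    finally show "(INF T\<in>half_rules SP Sc. SUP tau\<in>{tau. C-lipschitz_on UNIV tau}. ereal (regret SP X sdv Sc T tau)) \<le> ereal V" .
  next
    show "ereal V \<le> (INF T\<in>half_rules SP Sc. SUP tau\<in>{tau. C-lipschitz_on UNIV tau}. ereal (regret SP X sdv Sc T tau))"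
    proof (rule INF_greatest)
      fix T assume "T \<in> half_rules SP Sc"
      then show "ereal V \<le> (SUP tau\<in>{tau. C-lipschitz_on UNIV tau}. ereal (regret SP X sdv Sc T tau))"
        using tauL lower by (intro SUP_upper2[of tau]) auto
    qed
  qed
  then show ?thesis unfolding V_def \<delta>_def N_def .
qed


theorem mainTheorem4:
  fixes nS k :: nat and SE SP :: "nat set" and X :: "nat \<Rightarrow> real^'d"
    and sdv :: "nat \<Rightarrow> real" and C :: real and tau0 :: "real^'d \<Rightarrow> real"
  assumes SE_sub: "SE \<subseteq> {1..nS}" and SE_card: "card SE \<ge> 2"
    and SP_sub: "SP \<subseteq> {1..nS}" and SP_ne: "SP \<noteq> {}"
    and sigma_pos: "\<forall>s\<in>{1..nS}. sdv s > 0"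
    and C_pos: "C > 0"
    and A1: "C-lipschitz_on UNIV tau0"
    and A2: "inj_on X {1..nS}"
    and k_ge: "1 \<le> k" and k_lt: "k < card SE"
    and C_gt: "C > Cstar SE SP k X sdv"
    and disj: "SE \<inter> SP = {}"
  shows "(\<forall>Sc\<in>Acal SE k. Sc \<noteq> {} \<longrightarrow>
            minimax_regret C SP X sdv Sc =
            ereal (C / 2 * (1 / real (card SP)) * (\<Sum>s\<in>SP. norm (X s - X (NN X Sc s)))))
       \<and> (\<forall>Sstar\<in>Acal SE k. Sstar \<noteq> {} \<longrightarrow>
            (\<forall>Sc\<in>Acal SE k. Sc \<noteq> {} \<longrightarrow>
               (\<Sum>s\<in>SP. norm (X s - X (NN X Sstar s))) \<le> (\<Sum>s\<in>SP. norm (X s - X (NN X Sc s)))) \<longrightarrow>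
            (\<forall>Sc\<in>Acal SE k. Sc \<noteq> {} \<longrightarrow>
               minimax_regret C SP X sdv Sstar \<le> minimax_regret C SP X sdv Sc))"
proof -
  have eq: "minimax_regret C SP X sdv Sc =
            ereal (C / 2 * (1 / real (card SP)) * (\<Sum>s\<in>SP. norm (X s - X (NN X Sc s))))"
    if "Sc \<in> Acal SE k" "Sc \<noteq> {}" for Sc
    by (rule main_eq[OF SE_sub SP_sub SP_ne sigma_pos C_pos A2 C_gt disj that])
  show ?thesis
  proof (intro conjI ballI impI)
    fix Sc assume "Sc \<in> Acal SE k" "Sc \<noteq> {}"
    then show "minimax_regret C SP X sdv Sc =
            ereal (C / 2 * (1 / real (card SP)) * (\<Sum>s\<in>SP. norm (X s - X (NN X Sc s))))"
      by (rule eq)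
  next
    fix Sstar Sc
    assume S1: "Sstar \<in> Acal SE k" "Sstar \<noteq> {}"
      and mn: "\<forall>Sc\<in>Acal SE k. Sc \<noteq> {} \<longrightarrow>
               (\<Sum>s\<in>SP. norm (X s - X (NN X Sstar s))) \<le> (\<Sum>s\<in>SP. norm (X s - X (NN X Sc s)))"
      and S2: "Sc \<in> Acal SE k" "Sc \<noteq> {}"
    have "(\<Sum>s\<in>SP. norm (X s - X (NN X Sstar s))) \<le> (\<Sum>s\<in>SP. norm (X s - X (NN X Sc s)))"
      using mn S2 by blast
    moreover have "0 \<le> C / 2 * (1 / real (card SP))" using C_pos by simp
    ultimately have "C / 2 * (1 / real (card SP)) * (\<Sum>s\<in>SP. norm (X s - X (NN X Sstar s)))
        \<le> C / 2 * (1 / real (card SP)) * (\<Sum>s\<in>SP. norm (X s - X (NN X Sc s)))"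
      by (intro mult_left_mono)
    then show "minimax_regret C SP X sdv Sstar \<le> minimax_regret C SP X sdv Sc"
      using eq[OF S1] eq[OF S2] by simp
  qed
qed

end
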